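(* Let $\{X^I\}_{I\in\mathcal{I}}$ satisfy conditions (i)–(v) of the context. Then for every $\varepsilon>0$ there is $M>0$ such that $\mathbb{P}(X^{[0,2^n]}(1)\ge M)\le\varepsilon$ for all $n\in\mathbb{N}$.
   Context: $\mathcal{I}$ is the set of closed bounded intervals of $\mathbb{R}$. For each $I\in\mathcal{I}$, $X^I=(X^I(t))_{t\in I}$ is a real stochastic process. Assume: (i) $\mathbb{E}[\log^+|X^I(t)|]<\infty$ for all $I$, $t\in I$. (ii) $\lim_{s\to t}\mathbb{P}(|X^I(t)-X^I(s)|>\varepsilon)=0$ for all $\varepsilon>0$. (iii) $X^{[a,b]}(a)=X^{[a,b]}(b)=0$. (iv) For $I'=[a,b]\subset I$, conditionally on $(X^I(t))_{t\in I\setminus I'}$, $(X^I(s))_{s\in I'}$ has the law of $L(s)+\tilde X^{I'}(s)$, where $L$ is the linear interpolation between $X^I(a)$ and $X^I(b)$ and $\tilde X^{I'}$ is an independent copy of $X^{I'}$. (v) For $a\in\mathbb{R}$, $c>0$: $(X^{I-a}(t-a))_{t\in I}\overset{(d)}{=}(X^I(t))_{t\in I}$ and $(c^{-1/2}X^{cI}(ct))_{t\in I}\overset{(d)}{=}(X^I(t))_{t\in I}$. *)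

theory Defs
  imports "HOL-Probability.Probability"
begin

definition logplus :: "real \<Rightarrow> real" where
  "logplus x = (if \<bar>x\<bar> \<le> 1 then 0 else ln \<bar>x\<bar>)"

definition proc_law :: "'w measure \<Rightarrow> real \<Rightarrow> real \<Rightarrow> (real \<Rightarrow> 'w \<Rightarrow> real) \<Rightarrow> (real \<Rightarrow> real) measure" where
  "proc_law Q a b Y = distr Q (Pi\<^sub>M {a..b} (\<lambda>_. borel)) (\<lambda>\<omega>. \<lambda>t\<in>{a..b}. Y t \<omega>)"

definition lin_interp :: "real \<Rightarrow> real \<Rightarrow> real \<Rightarrow> real \<Rightarrow> real \<Rightarrow> real" where
  "lin_interp c d u v t = u + (t - c) / (d - c) * (v - u)"

end

theory Submission imports Defs begin

lemma proc_law_eval: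
  assumes eq: "proc_law Q a b Y = proc_law Q' a b Y'"
    and mY: "\<And>t. t \<in> {a..b} \<Longrightarrow> Y t \<in> borel_measurable Q"
    and mY': "\<And>t. t \<in> {a..b} \<Longrightarrow> Y' t \<in> borel_measurable Q'"
    and t: "t \<in> {a..b}"
  shows "measure Q {\<omega>\<in>space Q. r \<le> Y t \<omega>} = measure Q' {\<omega>\<in>space Q'. r \<le> Y' t \<omega>}"
proof -
  let ?N = "Pi\<^sub>M {a..b} (\<lambda>_. borel :: real measure)"
  let ?A = "{f\<in>space ?N. r \<le> f t}"
  have c: "(\<lambda>f. f t) \<in> borel_measurable ?N"
    using t by (rule measurable_component_singleton)
  have "?A = (\<lambda>f. f t) -` {r..} \<inter> space ?N" by auto
  also have "\<dots> \<in> sets ?N" using c by (rule measurable_sets) simp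
  finally have A: "?A \<in> sets ?N" .
  have F: "(\<lambda>\<omega>. \<lambda>t\<in>{a..b}. Y t \<omega>) \<in> measurable Q ?N"
    by (rule measurable_restrict) (rule mY)
  have G: "(\<lambda>\<omega>. \<lambda>t\<in>{a..b}. Y' t \<omega>) \<in> measurable Q' ?N"
    by (rule measurable_restrict) (rule mY')
  have "measure Q {\<omega>\<in>space Q. r \<le> Y t \<omega>} = measure (proc_law Q a b Y) ?A"
    unfolding proc_law_def using t
    by (subst measure_distr[OF F A]) (auto intro!: arg_cong[where f="measure Q"] simp: space_PiM)
  also have "\<dots> = measure (proc_law Q' a b Y') ?A" by (simp add: eq)
  also have "\<dots> = measure Q' {\<omega>\<in>space Q'. r \<le> Y' t \<omega>}"
    unfolding proc_law_def using t
    by (subst measure_distr[OF G A]) (auto intro!: arg_cong[where f="measure Q'"] simp: space_PiM)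
  finally show ?thesis .
qed

lemma count_bound:
  fixes c y :: real assumes c: "c > 0"
  shows "(\<Sum>k\<in>{1..n}. (if c * real k \<le> y then 1 else 0::real)) \<le> max 0 y / c"
proof (induction n)
  case 0 then show ?case using c by simp
next
  case (Suc n)
  show ?case
  proof (cases "c * real (Suc n) \<le> y")
    case True
    have "(\<Sum>k\<in>{1..Suc n}. (if c * real k \<le> y then 1 else 0::real)) \<le> (\<Sum>k\<in>{1..Suc n}. 1)"
      by (intro sum_mono) auto
    also have "\<dots> = real (Suc n)" by simp
    also have "\<dots> \<le> max 0 y / c" using True c by (simp add: field_simps)
    finally show ?thesis .
  next
    case False
    then show ?thesis using Suc by simp
  qed
qed

lemma thr_aux:
  fixes A T M :: real
  assumes A: "A > 0" and h: "A*A*A*A = 2*T"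
  shows "(2*M/A)*T/(A*A) = M*A"
proof -
  have "(2*M/A)*T/(A*A) = M*(2*T)/(A*A*A)" by (simp add: field_simps)
  also have "\<dots> = M*(A*A*A*A)/(A*A*A)" using h by simp
  also have "\<dots> = M*A" using A by (simp add: field_simps)
  finally show ?thesis .
qed

lemma geom_bound:
  fixes q :: real assumes q: "q > 1"
  shows "(\<Sum>k\<in>{1..n}. 1 / q^k) \<le> 1 / (q - 1)"
proof -
  have eq: "(\<Sum>k\<in>{1..n}. 1 / q^k) = (1 - 1/q^n) / (q - 1)" for n
  proof (induction n)
    case 0 then show ?case by simp
  next
    case (Suc n)
    have "(\<Sum>k\<in>{1..Suc n}. 1 / q^k) = (1 - 1/q^n) / (q - 1) + 1/q^Suc n"
      using Suc by (simp add: sum.cl_ivl_Suc)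
    also have "\<dots> = (1 - 1/q^Suc n) / (q - 1)" using q by (simp add: field_simps)
    finally show ?case .
  qed
  show ?thesis unfolding eq using q by (simp add: divide_right_mono)
qed

theorem lemma5p1:
  fixes P :: "'a measure"
    and X :: "real \<Rightarrow> real \<Rightarrow> real \<Rightarrow> 'a \<Rightarrow> real"
  assumes prob: "prob_space P"
    and meas: "\<And>a b t. a \<le> b \<Longrightarrow> t \<in> {a..b} \<Longrightarrow> X a b t \<in> borel_measurable P"
    and cond_i: "\<And>a b t. a \<le> b \<Longrightarrow> t \<in> {a..b} \<Longrightarrow>
                   integrable P (\<lambda>\<omega>. logplus (X a b t \<omega>))"
    and cond_ii: "\<And>a b t \<epsilon>. a \<le> b \<Longrightarrow> t \<in> {a..b} \<Longrightarrow> \<epsilon> > 0 \<Longrightarrow>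
                   ((\<lambda>s. measure P {\<omega> \<in> space P. \<bar>X a b t \<omega> - X a b s \<omega>\<bar> > \<epsilon>})
                      \<longlongrightarrow> 0) (at t within {a..b})"
    and cond_iii: "\<And>a b \<omega>. a \<le> b \<Longrightarrow> \<omega> \<in> space P \<Longrightarrow> X a b a \<omega> = 0 \<and> X a b b \<omega> = 0"
    and cond_iv: "\<And>a b c d. a \<le> c \<Longrightarrow> c \<le> d \<Longrightarrow> d \<le> b \<Longrightarrow>
                   proc_law P a b (X a b) =
                   proc_law (P \<Otimes>\<^sub>M P) a b
                     (\<lambda>t \<omega>\<omega>'. if t \<in> {c..d}
                        then lin_interp c d (X a b c (fst \<omega>\<omega>')) (X a b d (fst \<omega>\<omega>')) t
                             + X c d t (snd \<omega>\<omega>')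
                        else X a b t (fst \<omega>\<omega>'))"
    and cond_v_shift: "\<And>a b s. a \<le> b \<Longrightarrow>
                   proc_law P a b (\<lambda>t. X (a - s) (b - s) (t - s)) = proc_law P a b (X a b)"
    and cond_v_scale: "\<And>a b c. a \<le> b \<Longrightarrow> c > 0 \<Longrightarrow>
                   proc_law P a b (\<lambda>t \<omega>. X (c * a) (c * b) (c * t) \<omega> / sqrt c)
                     = proc_law P a b (X a b)"
  shows "\<forall>\<epsilon>>0. \<exists>K>0. \<forall>n::nat.
           measure P {\<omega> \<in> space P. X 0 (2 ^ n) 1 \<omega> \<ge> K} \<le> \<epsilon>"
proof -
  interpret P: prob_space P by (rule prob)
  interpret PP: pair_prob_space P P by unfold_locales
  have setm: "\<And>a b t r. a \<le> b \<Longrightarrow> t \<in> {a..b} \<Longrightarrow> {\<omega>\<in>space P. r \<le> X a b t \<omega>} \<in> sets P"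
  proof -
    fix a b t r :: real assume "a \<le> b" "t \<in> {a..b}"
    then have m: "X a b t \<in> borel_measurable P" by (rule meas)
    show "{\<omega>\<in>space P. r \<le> X a b t \<omega>} \<in> sets P" using m by measurable
  qed
  have stepA: "measure P {\<omega>\<in>space P. s + t \<le> X 0 (2^Suc n) 1 \<omega>}
      \<le> measure P {\<omega>\<in>space P. s \<le> X 0 (2^Suc n) (2^n) \<omega> / 2^n}
        + measure P {\<omega>\<in>space P. t \<le> X 0 (2^n) 1 \<omega>}" for n :: nat and s t :: real
  proof -
    define b :: real where "b = 2^Suc n"
    define d :: real where "d = 2^n"
    have d1: "1 \<le> d" unfolding d_def by simp
    have db: "d \<le> b" unfolding d_def b_def by simp
    have d0: "0 < d" using d1 by simp
    let ?Y' = "(\<lambda>t \<omega>\<omega>'. if t \<in> {0..d}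
                        then lin_interp 0 d (X 0 b 0 (fst \<omega>\<omega>')) (X 0 b d (fst \<omega>\<omega>')) t
                             + X 0 d t (snd \<omega>\<omega>')
                        else X 0 b t (fst \<omega>\<omega>'))"
    have eq: "proc_law P 0 b (X 0 b) = proc_law (P \<Otimes>\<^sub>M P) 0 b ?Y'"
      using cond_iv[of 0 0 d b] d1 db by simp
    have mY': "?Y' u \<in> borel_measurable (P \<Otimes>\<^sub>M P)" if u: "u \<in> {0..b}" for u
    proof (cases "u \<in> {0..d}")
      case True
      have m1: "(\<lambda>x. X 0 b 0 (fst x)) \<in> borel_measurable (P \<Otimes>\<^sub>M P)"
        by (rule measurable_compose[OF measurable_fst meas]) (use db d1 in auto)
      have m2: "(\<lambda>x. X 0 b d (fst x)) \<in> borel_measurable (P \<Otimes>\<^sub>M P)"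
        by (rule measurable_compose[OF measurable_fst meas]) (use db d1 in auto)
      have m3: "(\<lambda>x. X 0 d u (snd x)) \<in> borel_measurable (P \<Otimes>\<^sub>M P)"
        by (rule measurable_compose[OF measurable_snd meas]) (use True d1 in auto)
      show ?thesis using True m1 m2 m3 unfolding lin_interp_def by simp
    next
      case False
      have m1: "(\<lambda>x. X 0 b u (fst x)) \<in> borel_measurable (P \<Otimes>\<^sub>M P)"
        by (rule measurable_compose[OF measurable_fst meas]) (use u in auto)
      have "?Y' u = (\<lambda>x. X 0 b u (fst x))" using False by (intro ext) auto
      then show ?thesis using m1 by simp
    qed
    have mX: "X 0 b d \<in> borel_measurable P" using meas db d1 by auto
    have A1: "{\<omega>\<in>space P. s \<le> X 0 b d \<omega> / d} \<in> sets P"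
      using mX by measurable
    have A2: "{\<omega>\<in>space P. t \<le> X 0 d 1 \<omega>} \<in> sets P" using setm[of 0 d 1] d1 by auto
    have "measure P {\<omega>\<in>space P. s + t \<le> X 0 b 1 \<omega>}
        = measure (P \<Otimes>\<^sub>M P) {\<omega>\<in>space (P \<Otimes>\<^sub>M P). s + t \<le> ?Y' 1 \<omega>}"
      by (rule proc_law_eval[OF eq]) (use meas mY' d1 db in auto)
    also have "\<dots> \<le> measure (P \<Otimes>\<^sub>M P)
        ({\<omega>\<in>space P. s \<le> X 0 b d \<omega> / d} \<times> space P \<union> space P \<times> {\<omega>\<in>space P. t \<le> X 0 d 1 \<omega>})"
    proof (rule PP.P.finite_measure_mono)
      show "{\<omega>\<in>space (P \<Otimes>\<^sub>M P). s + t \<le> ?Y' 1 \<omega>}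
         \<subseteq> {\<omega>\<in>space P. s \<le> X 0 b d \<omega> / d} \<times> space P \<union> space P \<times> {\<omega>\<in>space P. t \<le> X 0 d 1 \<omega>}"
      proof
        fix x assume x: "x \<in> {\<omega>\<in>space (P \<Otimes>\<^sub>M P). s + t \<le> ?Y' 1 \<omega>}"
        then have sp: "fst x \<in> space P" "snd x \<in> space P" by (auto simp: space_pair_measure)
        have "X 0 b 0 (fst x) = 0" using cond_iii[of 0 b "fst x"] sp db d1 by auto
        then have "s + t \<le> X 0 b d (fst x) / d + X 0 d 1 (snd x)"
          using x d1 by (simp add: lin_interp_def)
        then have "s \<le> X 0 b d (fst x) / d \<or> t \<le> X 0 d 1 (snd x)" by linarith
        then show "x \<in> {\<omega>\<in>space P. s \<le> X 0 b d \<omega> / d} \<times> space P \<union> space P \<times> {\<omega>\<in>space P. t \<le> X 0 d 1 \<omega>}"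
          using sp by (cases x) auto
      qed
      show "{\<omega>\<in>space P. s \<le> X 0 b d \<omega> / d} \<times> space P \<union> space P \<times> {\<omega>\<in>space P. t \<le> X 0 d 1 \<omega>}
         \<in> sets (P \<Otimes>\<^sub>M P)" using A1 A2 by auto
    qed
    also have "\<dots> \<le> measure (P \<Otimes>\<^sub>M P) ({\<omega>\<in>space P. s \<le> X 0 b d \<omega> / d} \<times> space P)
        + measure (P \<Otimes>\<^sub>M P) (space P \<times> {\<omega>\<in>space P. t \<le> X 0 d 1 \<omega>})"
      by (rule measure_subadditive) (use A1 A2 in auto)
    also have "\<dots> = measure P {\<omega>\<in>space P. s \<le> X 0 b d \<omega> / d}
        + measure P {\<omega>\<in>space P. t \<le> X 0 d 1 \<omega>}"
    proof -
      show ?thesis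
        using A1 A2 by (simp add: measure_def P.emeasure_pair_measure_Times P.emeasure_space_1)
    qed
    finally show ?thesis unfolding b_def d_def .
  qed
  define Z where "Z = X 0 1 (1/2)"
  have stepB: "measure P {\<omega>\<in>space P. s \<le> X 0 (2^Suc n) (2^n) \<omega> / 2^n}
      = measure P {\<omega>\<in>space P. s * 2^n / sqrt (2^Suc n) \<le> Z \<omega>}" for n :: nat and s :: real
  proof -
    define c :: real where "c = 2^Suc n"
    have c0: "0 < c" unfolding c_def by simp
    have eq: "proc_law P 0 1 (\<lambda>t \<omega>. X (c * 0) (c * 1) (c * t) \<omega> / sqrt c) = proc_law P 0 1 (X 0 1)"
      by (rule cond_v_scale) (use c0 in auto)
    have "measure P {\<omega>\<in>space P. s * 2^n / sqrt c \<le> X (c * 0) (c * 1) (c * (1/2)) \<omega> / sqrt c}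
        = measure P {\<omega>\<in>space P. s * 2^n / sqrt c \<le> X 0 1 (1/2) \<omega>}"
    proof (rule proc_law_eval[OF eq])
      fix t :: real assume t: "t \<in> {0..1}"
      have "X (c * 0) (c * 1) (c * t) \<in> borel_measurable P"
        by (rule meas) (use t c0 in \<open>auto simp: mult_left_mono\<close>)
      then show "(\<lambda>\<omega>. X (c * 0) (c * 1) (c * t) \<omega> / sqrt c) \<in> borel_measurable P" by simp
    qed (use meas in auto)
    moreover have "c * (1/2) = 2^n" unfolding c_def by simp
    moreover have "{\<omega>\<in>space P. s * 2^n / sqrt c \<le> X 0 c (2^n) \<omega> / sqrt c}
        = {\<omega>\<in>space P. s \<le> X 0 c (2^n) \<omega> / 2^n}"
      using c0 by (auto simp: divide_le_cancel field_simps)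
    ultimately show ?thesis unfolding c_def Z_def by simp
  qed
  define q :: real where "q = 2 powr (1/4)"
  have q1: "1 < q" unfolding q_def by simp
  have q4: "q^4 = 2" unfolding q_def by (simp add: powr_realpow[symmetric] powr_powr)
  have q4n: "q^(4*n) = 2^n" for n :: nat by (simp add: power_mult q4)
  have sq: "sqrt (2^Suc n) = q^(Suc n) * q^(Suc n)" for n :: nat
  proof -
    have "(q^(Suc n) * q^(Suc n))^2 = 2^Suc n"
      by (metis (no_types) power2_eq_square power_mult_distrib q4n mult.commute power_mult numeral_Bit0 numeral_One mult_2 power_add)
    then show ?thesis using q1 by (metis abs_of_nonneg real_sqrt_abs zero_le_mult_iff zero_le_power less_imp_le order.trans zero_le_one)
  qed
  have thr: "(2*M/q^(Suc n)) * 2^n / sqrt (2^Suc n) = M * q^(Suc n)" for n :: nat and M :: real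
  proof -
    have "q^(Suc n)*q^(Suc n)*q^(Suc n)*q^(Suc n) = 2 * 2^n"
    proof -
      have "q^(Suc n)*q^(Suc n)*q^(Suc n)*q^(Suc n) = (q^(Suc n))^4" by (simp add: power4_eq_xxxx)
      also have "\<dots> = q^(4 * Suc n)" by (simp only: power_mult[symmetric] mult.commute)
      also have "\<dots> = 2 * 2^n" using q4n[of "Suc n"] by simp
      finally show ?thesis .
    qed
    then have h: "q^(Suc n)*q^(Suc n)*q^(Suc n)*q^(Suc n) = 2 * 2^n" .
    have A: "q^(Suc n) > 0" using q1 by simp
    have "(2*M/q^(Suc n)) * 2^n / sqrt (2^Suc n) = (2*M/q^(Suc n)) * 2^n / (q^(Suc n) * q^(Suc n))"
      by (simp only: sq)
    also have "\<dots> = M * q^(Suc n)"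
      using A h by (rule thr_aux)
    finally show ?thesis .
  qed
  have combined: "measure P {\<omega>\<in>space P. s + t \<le> X 0 (2^Suc n) 1 \<omega>}
      \<le> measure P {\<omega>\<in>space P. s * 2^n / sqrt (2^Suc n) \<le> Z \<omega>}
        + measure P {\<omega>\<in>space P. t \<le> X 0 (2^n) 1 \<omega>}" for n s t
    using stepA[of s t n] stepB[of s n] by simp
  have ind: "measure P {\<omega>\<in>space P. (\<Sum>k\<in>{1..n}. 2*M/q^k) + 1 \<le> X 0 (2^n) 1 \<omega>}
      \<le> (\<Sum>k\<in>{1..n}. measure P {\<omega>\<in>space P. M * q^k \<le> Z \<omega>})" for n M
  proof (induction n)
    case 0
    have "{\<omega>\<in>space P. (\<Sum>k\<in>{1..0::nat}. 2*M/q^k) + 1 \<le> X 0 (2^0) 1 \<omega>} = {}"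
      using cond_iii[of 0 1] by auto
    then have "{\<omega>\<in>space P. 1 \<le> X 0 1 1 \<omega>} = {}" by simp
    then have "measure P {\<omega>\<in>space P. 1 \<le> X 0 1 1 \<omega>} = 0" by (simp only: measure_empty)
    then show ?case by simp
  next
    case (Suc n)
    have "measure P {\<omega>\<in>space P. (\<Sum>k\<in>{1..Suc n}. 2*M/q^k) + 1 \<le> X 0 (2^Suc n) 1 \<omega>}
       = measure P {\<omega>\<in>space P. 2*M/q^(Suc n) + ((\<Sum>k\<in>{1..n}. 2*M/q^k) + 1) \<le> X 0 (2^Suc n) 1 \<omega>}"
      by (simp add: sum.cl_ivl_Suc add_ac)
    also have "\<dots> \<le> measure P {\<omega>\<in>space P. M * q^(Suc n) \<le> Z \<omega>}
        + measure P {\<omega>\<in>space P. (\<Sum>k\<in>{1..n}. 2*M/q^k) + 1 \<le> X 0 (2^n) 1 \<omega>}"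
      using combined[of "2*M/q^(Suc n)" "(\<Sum>k\<in>{1..n}. 2*M/q^k) + 1" n] unfolding thr[of M n] .
    also have "\<dots> \<le> (\<Sum>k\<in>{1..Suc n}. measure P {\<omega>\<in>space P. M * q^k \<le> Z \<omega>})"
      using Suc by (simp add: sum.cl_ivl_Suc)
    finally show ?case .
  qed
  define L where "L = (\<lambda>\<omega>. logplus (Z \<omega>))"
  define c where "c = ln q"
  have c0: "0 < c" unfolding c_def using q1 by simp
  have mZ: "Z \<in> borel_measurable P" unfolding Z_def by (rule meas) auto
  have mlog: "logplus \<in> borel_measurable borel" unfolding logplus_def by measurable
  have mL: "L \<in> borel_measurable P" unfolding L_def
    using measurable_compose[OF mZ mlog] by (simp add: comp_def)
  have iL: "integrable P L" unfolding L_def Z_def by (rule cond_i) auto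
  have L0: "0 \<le> L \<omega>" for \<omega> unfolding L_def logplus_def by auto
  have ms: "(\<lambda>\<omega>. max 0 (L \<omega> - real i)) \<in> borel_measurable P" for i using mL by measurable
  have lim: "AE \<omega> in P. (\<lambda>i. max 0 (L \<omega> - real i)) \<longlonglongrightarrow> 0"
  proof (rule AE_I2)
    fix \<omega>
    obtain N :: nat where N: "L \<omega> \<le> real N" using real_arch_simple by blast
    have "eventually (\<lambda>i. max 0 (L \<omega> - real i) = 0) sequentially"
      unfolding eventually_sequentially using N by (intro exI[of _ N]) auto
    then show "(\<lambda>i. max 0 (L \<omega> - real i)) \<longlonglongrightarrow> 0" by (rule tendsto_eventually)
  qed
  have bnd: "AE \<omega> in P. norm (max 0 (L \<omega> - real i)) \<le> L \<omega>" for i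
    using L0 by (intro AE_I2) auto
  have DC: "(\<lambda>i. \<integral>\<omega>. max 0 (L \<omega> - real i) \<partial>P) \<longlonglongrightarrow> (\<integral>\<omega>. 0 \<partial>P)"
    by (rule integral_dominated_convergence[OF _ ms iL lim bnd]) simp
  have imax: "integrable P (\<lambda>\<omega>. max 0 (L \<omega> - real i))" for i
    by (rule integrable_dominated_convergence2[OF _ ms iL lim bnd]) simp
  show ?thesis
  proof (intro allI impI)
    fix \<epsilon> :: real assume e: "\<epsilon> > 0"
    have "eventually (\<lambda>i. (\<integral>\<omega>. max 0 (L \<omega> - real i) \<partial>P) < \<epsilon> * c) sequentially"
      using order_tendstoD(2)[OF DC] e c0 by simp
    then obtain m :: nat where m: "(\<integral>\<omega>. max 0 (L \<omega> - real m) \<partial>P) < \<epsilon> * c"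
      unfolding eventually_sequentially by blast
    define M where "M = exp (real m)"
    have M1: "1 \<le> M" unfolding M_def by simp
    define K where "K = 2 * M / (q - 1) + 1"
    have K0: "K > 0"
    proof -
      have "0 \<le> 2 * M / (q - 1)" using M1 q1 by simp
      then show ?thesis unfolding K_def by linarith
    qed
    define A where "A k = {\<omega>\<in>space P. c * real k \<le> L \<omega> - real m}" for k :: nat
    have Asets: "A k \<in> sets P" for k unfolding A_def using mL by measurable
    have tail: "measure P {\<omega>\<in>space P. M * q^k \<le> Z \<omega>} \<le> measure P (A k)" if k: "k \<ge> 1" for k
    proof (rule P.finite_measure_mono[OF _ Asets])
      show "{\<omega>\<in>space P. M * q^k \<le> Z \<omega>} \<subseteq> A k"
      proof
        fix \<omega> assume w: "\<omega> \<in> {\<omega>\<in>space P. M * q^k \<le> Z \<omega>}"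
        have qk: "1 < q^k" using q1 k by simp
        have Mq: "1 < M * q^k" using M1 qk by (metis less_1_mult mult.commute mult_le_cancel_left1 not_le order.strict_trans2)
        then have Zg: "1 < Z \<omega>" using w by auto
        then have "L \<omega> = ln (Z \<omega>)" unfolding L_def logplus_def by auto
        moreover have "ln (M * q^k) \<le> ln (Z \<omega>)" using w Mq by auto
        moreover have "ln (M * q^k) = real m + c * real k"
          unfolding M_def c_def using q1 by (simp add: ln_mult ln_realpow)
        ultimately show "\<omega> \<in> A k" using w unfolding A_def by auto
      qed
    qed
    have "(\<Sum>k\<in>{1..n}. measure P (A k)) \<le> (\<integral>\<omega>. max 0 (L \<omega> - real m) \<partial>P) / c" for n
    proof -
      have "(\<Sum>k\<in>{1..n}. measure P (A k)) = (\<Sum>k\<in>{1..n}. \<integral>\<omega>. indicator (A k) \<omega> \<partial>P)"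
        using Asets by (simp add: P.emeasure_eq_measure)
      also have "\<dots> = (\<integral>\<omega>. (\<Sum>k\<in>{1..n}. indicator (A k) \<omega>) \<partial>P)"
        by (rule Bochner_Integration.integral_sum[where f="\<lambda>k \<omega>. indicator (A k) \<omega> :: real", symmetric])
           (use Asets in \<open>auto simp: P.emeasure_eq_measure\<close>)
      also have "\<dots> \<le> (\<integral>\<omega>. max 0 (L \<omega> - real m) / c \<partial>P)"
      proof (rule integral_mono)
        show "integrable P (\<lambda>\<omega>. \<Sum>k\<in>{1..n}. indicator (A k) \<omega> :: real)"
          using Asets by (auto simp: P.emeasure_eq_measure)
        show "integrable P (\<lambda>\<omega>. max 0 (L \<omega> - real m) / c)" using imax by simp
        fix \<omega> assume w: "\<omega> \<in> space P"
        have "(\<Sum>k\<in>{1..n}. indicator (A k) \<omega> :: real)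
            = (\<Sum>k\<in>{1..n}. (if c * real k \<le> L \<omega> - real m then 1 else 0::real))"
          using w by (intro sum.cong) (auto simp: A_def indicator_def)
        also have "\<dots> \<le> max 0 (L \<omega> - real m) / c" by (rule count_bound[OF c0])
        finally show "(\<Sum>k\<in>{1..n}. indicator (A k) \<omega> :: real) \<le> max 0 (L \<omega> - real m) / c" .
      qed
      also have "\<dots> = (\<integral>\<omega>. max 0 (L \<omega> - real m) \<partial>P) / c" by simp
      finally show ?thesis .
    qed
    then have sumA: "(\<Sum>k\<in>{1..n}. measure P (A k)) < \<epsilon>" for n
      using m c0 by (meson divide_less_eq order_le_less_trans mult.commute)
    show "\<exists>K>0. \<forall>n::nat. measure P {\<omega> \<in> space P. X 0 (2 ^ n) 1 \<omega> \<ge> K} \<le> \<epsilon>"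
    proof (intro exI[of _ K] conjI allI K0)
      fix n :: nat
      have S: "(\<Sum>k\<in>{1..n}. 2*M/q^k) \<le> 2 * M / (q - 1)"
      proof -
        have "(\<Sum>k\<in>{1..n}. 2*M/q^k) = 2 * M * (\<Sum>k\<in>{1..n}. 1/q^k)"
          by (simp add: sum_distrib_left)
        also have "\<dots> \<le> 2 * M * (1 / (q - 1))"
          using geom_bound[OF q1, of n] M1 by (intro mult_left_mono) auto
        finally show ?thesis by simp
      qed
      have "measure P {\<omega> \<in> space P. X 0 (2 ^ n) 1 \<omega> \<ge> K}
          \<le> measure P {\<omega>\<in>space P. (\<Sum>k\<in>{1..n}. 2*M/q^k) + 1 \<le> X 0 (2^n) 1 \<omega>}"
        by (rule P.finite_measure_mono[OF _ setm[of 0 "2^n" 1]]) (use S K_def in auto)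
      also have "\<dots> \<le> (\<Sum>k\<in>{1..n}. measure P {\<omega>\<in>space P. M * q^k \<le> Z \<omega>})" by (rule ind)
      also have "\<dots> \<le> (\<Sum>k\<in>{1..n}. measure P (A k))" by (intro sum_mono tail) auto
      also have "\<dots> \<le> \<epsilon>" using sumA[of n] by simp
      finally show "measure P {\<omega> \<in> space P. X 0 (2 ^ n) 1 \<omega> \<ge> K} \<le> \<epsilon>" .
    qed
  qed
qed

end
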